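(* Let $\mathbb{F}$ be a finite field and let $n_x,n_y,m$ be positive integers with $n_x+n_y\le m$. Let $B\in\mathcal{B}(n_x,n_y,m)$ be a bilinear sequence whose quadratic homogeneous part $\tilde{B}\in\mathcal{B}^{(h)}(n_x,n_y,m)$ is $\mathbf{y}$-semiregular. Then $$d_{\mathbf{y}\text{-}ff}(B)=\min\left\{d\in\mathbb{Z}^+ \;:\; d>\frac{n_x(n_y-1)}{m-n_x}+1\right\}.$$
   Context: Variables $\mathbf{x}=(x_1,\dots,x_{n_x})$, $\mathbf{y}=(y_1,\dots,y_{n_y})$. A bilinear polynomial is $f=\mathbf{x}\mathbf{A}\mathbf{y}^{\top}+\mathbf{b}\mathbf{x}^{\top}+\mathbf{c}\mathbf{y}^{\top}+d$ with $\mathbf{A}\in\mathbb{F}^{n_x\times n_y}$, $\mathbf{b}\in\mathbb{F}^{n_x}$, $\mathbf{c}\in\mathbb{F}^{n_y}$, $d\in\mathbb{F}$; its quadratic homogeneous part is $\mathbf{x}\mathbf{A}\mathbf{y}^{\top}$. $\mathcal{B}(n_x,n_y,m)$ is the set of length-$m$ sequences of bilinear polynomials and $\mathcal{B}^{(h)}(n_x,n_y,m)$ those with zero linear and constant parts; $\tilde B=(\tilde f_1,\dots,\tilde f_m)$ is the sequence of quadratic parts of $B$. For $j\ge2$, $\mathbf{M}_{\mathbf{y},j}(\tilde B)$ is the matrix whose rows are the coefficient vectors of the $m\binom{n_y+j-3}{j-2}$ polynomials $\mathfrak{m}\tilde f_i$, $1\le i\le m$, $\mathfrak{m}$ a monomial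 of $\mathbb{F}[\mathbf{y}]$ of degree exactly $j-2$. $\tilde B$ is $\mathbf{y}$-$d$-regular if $\mathrm{Rank}(\mathbf{M}_{\mathbf{y},j}(\tilde B))=m\binom{n_y+j-3}{j-2}$ for $j=2,\dots,d$; $d_{\mathbf{y},reg}(\tilde B)$ is the minimum $d$ with $\mathrm{Rank}(\mathbf{M}_{\mathbf{y},d}(\tilde B))=n_x\binom{n_y+d-2}{d-1}$; $\tilde B$ is $\mathbf{y}$-semiregular if it is $\mathbf{y}$-$d$-regular for all $d<d_{\mathbf{y},reg}(\tilde B)$. A syzygy of $\tilde B$ is $(g_1,\dots,g_m)$ with $\sum g_i\tilde f_i=0$; it is trivial if it lies in the $\mathbb{F}[\mathbf{x},\mathbf{y}]$-module generated by $\tilde f_i\mathbf{e}_j-\tilde f_j\mathbf{e}_i$ ($1\le i<j\le m$, $\mathbf{e}_i$ the standard basis vectors). $B$ has a $\mathbf{y}$-degree fall at degree $d$ if there is a sequence $G\in\mathbb{F}[\mathbf{y}]^m$ of homogeneous polynomials of degree $d-2$ which is a non-trivial syzygy of $\tilde B$; the $\mathbf{y}$-first fall degree $d_{\mathbf{y}\text{-}ff}(B)$ is the smallest such $d$. *)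

theory Defs
  imports "HOL-Analysis.Analysis" "HOL-Library.Poly_Mapping" "HOL-Library.Extended_Nat"
begin

text \<open>Multivariate polynomials over a field in the variables x_0,x_1,... and y_0,y_1,...
  (indices start at 0; x_i for i < nx and y_j for j < ny are the variables of the paper).\<close>

datatype var = X nat | Y nat

type_synonym monom = "var \<Rightarrow>\<^sub>0 nat"
type_synonym 'a mpoly = "monom \<Rightarrow>\<^sub>0 'a"

definition mdeg :: "monom \<Rightarrow> nat" where
  "mdeg \<mu> = (\<Sum>v\<in>Poly_Mapping.keys \<mu>. Poly_Mapping.lookup \<mu> v)"

definition mon :: "monom \<Rightarrow> 'a::{zero,one} mpoly" where
  "mon \<mu> = Poly_Mapping.single \<mu> 1"

definition pscale :: "'a::field \<Rightarrow> 'a mpoly \<Rightarrow> 'a mpoly" where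
  "pscale c p = Poly_Mapping.map ((*) c) p"

definition rank_rows :: "'a::field mpoly set \<Rightarrow> nat" where
  "rank_rows S = vector_space.dim pscale S"

definition bilinear :: "nat \<Rightarrow> nat \<Rightarrow> 'a::field mpoly \<Rightarrow> bool" where
  "bilinear nx ny f \<longleftrightarrow> (\<forall>\<mu>\<in>Poly_Mapping.keys f.
      \<mu> = 0 \<or> (\<exists>i<nx. \<mu> = Poly_Mapping.single (X i) 1)
      \<or> (\<exists>j<ny. \<mu> = Poly_Mapping.single (Y j) 1)
      \<or> (\<exists>i<nx. \<exists>j<ny. \<mu> = Poly_Mapping.single (X i) 1 + Poly_Mapping.single (Y j) 1))"

text \<open>a sequence B = (f_1..f_m) in B(nx,ny,m), represented by f_0..f_{m-1}\<close>
definition bilinear_seq :: "nat \<Rightarrow> nat \<Rightarrow> nat \<Rightarrow> (nat \<Rightarrow> 'a::field mpoly) \<Rightarrow> bool" where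
  "bilinear_seq nx ny m B \<longleftrightarrow> (\<forall>k<m. bilinear nx ny (B k))"

definition quad_part :: "'a::field mpoly \<Rightarrow> 'a mpoly" where
  "quad_part f = Poly_Mapping.mapp (\<lambda>\<mu> c. if mdeg \<mu> = 2 then c else 0) f"

definition tilde :: "(nat \<Rightarrow> 'a::field mpoly) \<Rightarrow> nat \<Rightarrow> 'a mpoly" where
  "tilde B k = quad_part (B k)"

definition y_monoms :: "nat \<Rightarrow> nat \<Rightarrow> monom set" where
  "y_monoms ny e = {\<mu>. Poly_Mapping.keys \<mu> \<subseteq> Y ` {..<ny} \<and> mdeg \<mu> = e}"

text \<open>the set of rows of M_{y,j}(Bt): coefficient vectors of mon * ft_i\<close>
definition M_y_rows :: "nat \<Rightarrow> nat \<Rightarrow> (nat \<Rightarrow> 'a::field mpoly) \<Rightarrow> nat \<Rightarrow> 'a mpoly set" where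
  "M_y_rows ny m Bt j = {mon \<mu> * Bt i | i \<mu>. i < m \<and> \<mu> \<in> y_monoms ny (j - 2)}"

definition y_d_regular :: "nat \<Rightarrow> nat \<Rightarrow> (nat \<Rightarrow> 'a::field mpoly) \<Rightarrow> nat \<Rightarrow> bool" where
  "y_d_regular ny m Bt d \<longleftrightarrow>
     (\<forall>j\<in>{2..d}. rank_rows (M_y_rows ny m Bt j) = m * ((ny + j - 3) choose (j - 2)))"

definition y_reg_cond :: "nat \<Rightarrow> nat \<Rightarrow> nat \<Rightarrow> (nat \<Rightarrow> 'a::field mpoly) \<Rightarrow> nat \<Rightarrow> bool" where
  "y_reg_cond nx ny m Bt d \<longleftrightarrow> 2 \<le> d \<and>
     rank_rows (M_y_rows ny m Bt d) = nx * ((ny + d - 2) choose (d - 1))"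

definition d_y_reg :: "nat \<Rightarrow> nat \<Rightarrow> nat \<Rightarrow> (nat \<Rightarrow> 'a::field mpoly) \<Rightarrow> enat" where
  "d_y_reg nx ny m Bt = (if \<exists>d. y_reg_cond nx ny m Bt d
     then enat (LEAST d. y_reg_cond nx ny m Bt d) else \<infinity>)"

definition y_semiregular :: "nat \<Rightarrow> nat \<Rightarrow> nat \<Rightarrow> (nat \<Rightarrow> 'a::field mpoly) \<Rightarrow> bool" where
  "y_semiregular nx ny m Bt \<longleftrightarrow>
     (\<forall>d. enat d < d_y_reg nx ny m Bt \<longrightarrow> y_d_regular ny m Bt d)"

definition syzygy :: "nat \<Rightarrow> (nat \<Rightarrow> 'a::field mpoly) \<Rightarrow> (nat \<Rightarrow> 'a mpoly) \<Rightarrow> bool" where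
  "syzygy m Bt G \<longleftrightarrow> (\<Sum>i<m. G i * Bt i) = 0"

text \<open>trivial syzygy: element of the F[x,y]-module generated by ft_i e_j - ft_j e_i, i<j;
  component k of sum_{i<j} h_{ij} (ft_i e_j - ft_j e_i) is
  sum_{i<k} h_{ik} ft_i - sum_{k<j} h_{kj} ft_j\<close>
definition trivial_syzygy :: "nat \<Rightarrow> (nat \<Rightarrow> 'a::field mpoly) \<Rightarrow> (nat \<Rightarrow> 'a mpoly) \<Rightarrow> bool" where
  "trivial_syzygy m Bt G \<longleftrightarrow> (\<exists>h :: nat \<Rightarrow> nat \<Rightarrow> 'a mpoly. \<forall>k<m.
     G k = (\<Sum>i<k. h i k * Bt i) - (\<Sum>j\<in>{k<..<m}. h k j * Bt j))"

definition y_homog :: "nat \<Rightarrow> nat \<Rightarrow> 'a::field mpoly \<Rightarrow> bool" where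
  "y_homog ny e g \<longleftrightarrow> Poly_Mapping.keys g \<subseteq> y_monoms ny e"

definition y_degree_fall :: "nat \<Rightarrow> nat \<Rightarrow> (nat \<Rightarrow> 'a::field mpoly) \<Rightarrow> nat \<Rightarrow> bool" where
  "y_degree_fall ny m B d \<longleftrightarrow> 2 \<le> d \<and> (\<exists>G. (\<forall>i<m. y_homog ny (d - 2) (G i)) \<and>
     syzygy m (tilde B) G \<and> \<not> trivial_syzygy m (tilde B) G)"

definition d_y_ff :: "nat \<Rightarrow> nat \<Rightarrow> (nat \<Rightarrow> 'a::field mpoly) \<Rightarrow> enat" where
  "d_y_ff ny m B = (if \<exists>d. y_degree_fall ny m B d
     then enat (LEAST d. y_degree_fall ny m B d) else \<infinity>)"

end

theory Submission
  imports Defs "HOL-Library.Multiset"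
begin


lemma pscale_eq: "pscale c p = Poly_Mapping.single 0 c * p"
  unfolding pscale_def by (rule mult_map_scale_conv_mult)

interpretation V: vector_space "pscale :: 'a::field \<Rightarrow> 'a mpoly \<Rightarrow> 'a mpoly"
proof
  fix a b :: 'a and x y :: "'a mpoly"
  show "pscale a (x + y) = pscale a x + pscale a y" by (simp add: pscale_eq distrib_left)
  show "pscale (a + b) x = pscale a x + pscale b x" by (simp add: pscale_eq single_add distrib_right)
  show "pscale a (pscale b x) = pscale (a * b) x"
    by (simp add: pscale_eq mult.assoc[symmetric] mult_single)
  show "pscale 1 x = x" by (simp add: pscale_eq)
qed

lemma lookup_pscale [simp]: "Poly_Mapping.lookup (pscale c p) k = c * Poly_Mapping.lookup p k"
  unfolding pscale_eq by (simp add: mult_map_scale_conv_mult[symmetric] map.rep_eq when_def)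

lemma pscale_mult: "pscale c p * q = pscale c (p * q)"
  unfolding pscale_eq by (simp add: mult.assoc)

lemma lookup_mon: "Poly_Mapping.lookup (mon k :: 'a::{zero_neq_one} mpoly) j = (if k = j then 1 else 0)"
  unfolding mon_def by (simp add: lookup_single)

lemma keys_mon [simp]: "Poly_Mapping.keys (mon k :: 'a::{zero_neq_one} mpoly) = {k}"
  unfolding mon_def by simp

lemma lookup_pscale_mon: "Poly_Mapping.lookup (pscale c (mon k) :: 'a::field mpoly) j = (if k = j then c else 0)"
  by (cases "k = j") (simp_all add: lookup_mon)

lemma expansion:
  fixes p :: "'a::field mpoly"
  assumes "finite K" "Poly_Mapping.keys p \<subseteq> K"
  shows "p = (\<Sum>k\<in>K. pscale (Poly_Mapping.lookup p k) (mon k))"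
proof (rule poly_mapping_eqI)
  fix j
  have "Poly_Mapping.lookup (\<Sum>k\<in>K. pscale (Poly_Mapping.lookup p k) (mon k)) j
      = (\<Sum>k\<in>K. (if k = j then Poly_Mapping.lookup p k else 0))"
    by (simp add: lookup_sum lookup_pscale_mon del: lookup_pscale)
  also have "\<dots> = Poly_Mapping.lookup p j"
    using assms by (auto simp: in_keys_iff)
  finally show "Poly_Mapping.lookup p j = Poly_Mapping.lookup (\<Sum>k\<in>K. pscale (Poly_Mapping.lookup p k) (mon k)) j"
    by simp
qed

lemma in_span_mon:
  fixes p :: "'a::field mpoly"
  assumes "finite K" "Poly_Mapping.keys p \<subseteq> K"
  shows "p \<in> V.span (mon ` K)"
  apply (subst expansion[OF assms])
  apply (rule V.span_sum)
  apply (rule V.span_scale)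
  apply (rule V.span_base)
  by auto

lemma lookup_sum_mon:
  fixes c :: "monom \<Rightarrow> 'a::field"
  assumes "finite K" "j \<in> K"
  shows "Poly_Mapping.lookup (\<Sum>k\<in>K. pscale (c k) (mon k)) j = c j"
  using assms by (simp add: lookup_sum lookup_pscale_mon sum.delta del: lookup_pscale)

lemma keys_pscale_mon: "Poly_Mapping.keys (pscale c (mon k) :: 'a::field mpoly) \<subseteq> {k}"
  by (auto simp: in_keys_iff lookup_pscale_mon simp del: lookup_pscale split: if_splits)

lemma keys_sum_mon:
  fixes c :: "monom \<Rightarrow> 'a::field"
  shows "Poly_Mapping.keys (\<Sum>k\<in>K. pscale (c k) (mon k)) \<subseteq> K"
  using keys_sum[of "\<lambda>k. pscale (c k) (mon k)" K] keys_pscale_mon[of "c _"] by blast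

lemma indep_of_dim:
  fixes S :: "'a::field mpoly set"
  assumes "finite S" "V.dim S = card S"
  shows "V.independent S"
proof (rule ccontr)
  assume "\<not> V.independent S"
  then obtain a where a: "a \<in> S" "a \<in> V.span (S - {a})" unfolding V.dependent_def by blast
  have "S \<subseteq> V.span (S - {a})"
  proof
    fix x assume x: "x \<in> S"
    show "x \<in> V.span (S - {a})"
    proof (cases "x = a")
      case True then show ?thesis using a(2) by simp
    next
      case False then show ?thesis using x by (intro V.span_base) simp
    qed
  qed
  moreover have "finite (S - {a})" using assms(1) by simp
  ultimately have "V.dim S \<le> card (S - {a})" by (rule V.dim_le_card)
  also have "\<dots> < card S"
  proof -
    have "card S > 0" using a assms card_gt_0_iff by blast
    then show ?thesis using a assms by simp
  qed
  finally show False using assms by simp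
qed

lemma mdeg_superset:
  assumes "finite S" "Poly_Mapping.keys \<mu> \<subseteq> S"
  shows "mdeg \<mu> = (\<Sum>v\<in>S. Poly_Mapping.lookup \<mu> v)"
  unfolding mdeg_def using assms
  by (intro sum.mono_neutral_left) (auto simp: in_keys_iff)

lemma mdeg_add: "mdeg (a + b) = mdeg a + mdeg b"
proof -
  let ?S = "Poly_Mapping.keys a \<union> Poly_Mapping.keys b"
  have "mdeg (a + b) = (\<Sum>v\<in>?S. Poly_Mapping.lookup (a + b) v)"
    using keys_add[of a b] by (intro mdeg_superset) auto
  also have "\<dots> = (\<Sum>v\<in>?S. Poly_Mapping.lookup a v) + (\<Sum>v\<in>?S. Poly_Mapping.lookup b v)"
    by (simp add: lookup_add sum.distrib)
  also have "\<dots> = mdeg a + mdeg b"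
  proof -
    have "mdeg a = (\<Sum>v\<in>?S. Poly_Mapping.lookup a v)" by (rule mdeg_superset) auto
    moreover have "mdeg b = (\<Sum>v\<in>?S. Poly_Mapping.lookup b v)" by (rule mdeg_superset) auto
    ultimately show ?thesis by simp
  qed
  finally show ?thesis .
qed

lemma mdeg_single [simp]: "mdeg (Poly_Mapping.single v n) = n"
  unfolding mdeg_def by (cases "n = 0") auto

lemma mdeg_zero [simp]: "mdeg 0 = 0"
  unfolding mdeg_def by simp

definition to_ms :: "monom \<Rightarrow> var multiset" where
  "to_ms \<mu> = Abs_multiset (Poly_Mapping.lookup \<mu>)"

lemma count_to_ms: "count (to_ms \<mu>) = Poly_Mapping.lookup \<mu>"
  unfolding to_ms_def by (rule count_Abs_multiset) simp

lemma set_to_ms: "set_mset (to_ms \<mu>) = Poly_Mapping.keys \<mu>"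
proof (rule set_eqI)
  fix x
  have "x \<in># to_ms \<mu> \<longleftrightarrow> 0 < count (to_ms \<mu>) x" by (rule count_greater_zero_iff[symmetric])
  also have "\<dots> \<longleftrightarrow> x \<in> Poly_Mapping.keys \<mu>" unfolding count_to_ms in_keys_iff by simp
  finally show "x \<in># to_ms \<mu> \<longleftrightarrow> x \<in> Poly_Mapping.keys \<mu>" .
qed

lemma size_to_ms: "size (to_ms \<mu>) = mdeg \<mu>"
  unfolding mdeg_def size_multiset_overloaded_eq set_to_ms count_to_ms ..

lemma finite_count: "finite {x. count M x \<noteq> 0}"
proof -
  have "{x. count M x \<noteq> 0} = set_mset M" by auto
  then show ?thesis by simp
qed

lemma bij_to_ms: "bij_betw to_ms (y_monoms ny e) (multisets_of_size (Y ` {..<ny}) e)"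
proof (rule bij_betw_byWitness[where f' = "\<lambda>M. Abs_poly_mapping (count M)"])
  show "\<forall>a\<in>y_monoms ny e. Abs_poly_mapping (count (to_ms a)) = a"
    by (simp add: count_to_ms)
  show "\<forall>a'\<in>multisets_of_size (Y ` {..<ny}) e. to_ms (Abs_poly_mapping (count a')) = a'"
  proof
    fix M :: "var multiset"
    have "finite {x. count M x \<noteq> 0}" by (rule finite_count)
    then show "to_ms (Abs_poly_mapping (count M)) = M"
      by (intro multiset_eqI) (simp add: count_to_ms)
  qed
  show "to_ms ` y_monoms ny e \<subseteq> multisets_of_size (Y ` {..<ny}) e"
    by (auto simp: y_monoms_def multisets_of_size_def set_to_ms size_to_ms)
  show "(\<lambda>M. Abs_poly_mapping (count M)) ` multisets_of_size (Y ` {..<ny}) e \<subseteq> y_monoms ny e"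
  proof
    fix \<mu> assume "\<mu> \<in> (\<lambda>M. Abs_poly_mapping (count M)) ` multisets_of_size (Y ` {..<ny}) e"
    then obtain M where M: "M \<in> multisets_of_size (Y ` {..<ny}) e" and mu: "\<mu> = Abs_poly_mapping (count M)" by blast
    have "finite {x. count M x \<noteq> 0}" by (rule finite_count)
    then have "to_ms \<mu> = M" unfolding mu by (intro multiset_eqI) (simp add: count_to_ms)
    then have "Poly_Mapping.keys \<mu> = set_mset M" "mdeg \<mu> = size M"
      using set_to_ms[of \<mu>] size_to_ms[of \<mu>] by simp_all
    then show "\<mu> \<in> y_monoms ny e" using M
      by (simp add: y_monoms_def multisets_of_size_def)
  qed
qed

lemma finite_y_monoms: "finite (y_monoms ny e)"
  using bij_betw_finite[OF bij_to_ms] by (simp add: finite_multisets_of_size)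

lemma card_y_monoms: "card (y_monoms ny e) = (ny + e - 1) choose e"
proof -
  have "card (y_monoms ny e) = card (multisets_of_size (Y ` {..<ny}) e)"
    using bij_betw_same_card[OF bij_to_ms] .
  also have "\<dots> = (card (Y ` {..<ny}) + e - 1) choose e"
    by (rule card_multisets_of_size) simp
  also have "card (Y ` {..<ny}) = ny" by (simp add: card_image inj_on_def)
  finally show ?thesis .
qed



lemma keys_quad_bilinear:
  fixes f :: "'a::field mpoly"
  assumes "bilinear nx ny f" "\<kappa> \<in> Poly_Mapping.keys (quad_part f)"
  shows "\<exists>p<nx. \<exists>q<ny. \<kappa> = Poly_Mapping.single (X p) 1 + Poly_Mapping.single (Y q) 1"
proof -
  from assms(2) have "Poly_Mapping.lookup (quad_part f) \<kappa> \<noteq> 0" by (simp add: in_keys_iff)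
  then have k: "\<kappa> \<in> Poly_Mapping.keys f" "mdeg \<kappa> = 2"
    unfolding quad_part_def lookup_mapp by (auto simp: when_def split: if_splits)
  with assms(1) show ?thesis unfolding bilinear_def
    by (auto simp: mdeg_add)
qed

definition fam :: "(nat \<Rightarrow> 'a::field mpoly) \<Rightarrow> nat \<times> monom \<Rightarrow> 'a mpoly" where
  "fam Bt = (\<lambda>(i,\<mu>). mon \<mu> * Bt i)"

definition Idx :: "nat \<Rightarrow> nat \<Rightarrow> nat \<Rightarrow> (nat \<times> monom) set" where
  "Idx m ny d = {..<m} \<times> y_monoms ny (d - 2)"

definition Col :: "nat \<Rightarrow> nat \<Rightarrow> nat \<Rightarrow> monom set" where
  "Col nx ny d = (\<lambda>(i,\<nu>). Poly_Mapping.single (X i) 1 + \<nu>) ` ({..<nx} \<times> y_monoms ny (d - 1))"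

lemma finite_Idx: "finite (Idx m ny d)"
  unfolding Idx_def by (simp add: finite_y_monoms)

lemma card_Idx: "card (Idx m ny d) = m * card (y_monoms ny (d - 2))"
  unfolding Idx_def by (simp add: card_cartesian_product)

lemma finite_Col: "finite (Col nx ny d)"
  unfolding Col_def by (simp add: finite_y_monoms)

lemma card_Col: "card (Col nx ny d) \<le> nx * card (y_monoms ny (d - 1))"
  unfolding Col_def
  by (metis card_cartesian_product card_image_le card_lessThan finite_SigmaI finite_lessThan finite_y_monoms)

lemma rows_eq: "M_y_rows ny m Bt d = fam Bt ` Idx m ny d"
  unfolding M_y_rows_def fam_def Idx_def by auto

lemma keys_row:
  fixes B :: "nat \<Rightarrow> 'a::field mpoly"
  assumes "bilinear_seq nx ny m B" "x \<in> Idx m ny d" "2 \<le> d"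
  shows "Poly_Mapping.keys (fam (tilde B) x) \<subseteq> Col nx ny d"
proof
  obtain i \<mu> where x: "x = (i, \<mu>)" "i < m" "\<mu> \<in> y_monoms ny (d - 2)"
    using assms(2) unfolding Idx_def by auto
  fix \<kappa> assume "\<kappa> \<in> Poly_Mapping.keys (fam (tilde B) x)"
  then have "\<kappa> \<in> Poly_Mapping.keys (mon \<mu> * tilde B i)" using x by (simp add: fam_def)
  then obtain b where b: "b \<in> Poly_Mapping.keys (tilde B i)" "\<kappa> = \<mu> + b"
    using keys_mult[of "mon \<mu>" "tilde B i"] by auto
  have "bilinear nx ny (B i)" using assms(1) x unfolding bilinear_seq_def by auto
  then obtain p q where pq: "p < nx" "q < ny" "b = Poly_Mapping.single (X p) 1 + Poly_Mapping.single (Y q) 1"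
    using keys_quad_bilinear b(1) unfolding tilde_def by blast
  have "\<mu> + Poly_Mapping.single (Y q) 1 \<in> y_monoms ny (d - 1)"
  proof -
    have "Poly_Mapping.keys (\<mu> + Poly_Mapping.single (Y q) 1) \<subseteq> Poly_Mapping.keys \<mu> \<union> {Y q}"
      using keys_add[of \<mu> "Poly_Mapping.single (Y q) 1"] by auto
    also have "\<dots> \<subseteq> Y ` {..<ny}" using x(3) pq(2) unfolding y_monoms_def by auto
    finally show ?thesis using x(3) assms(3) unfolding y_monoms_def by (auto simp: mdeg_add)
  qed
  moreover have "\<kappa> = Poly_Mapping.single (X p) 1 + (\<mu> + Poly_Mapping.single (Y q) 1)"
    using b(2) pq(3) by (simp add: algebra_simps)
  ultimately show "\<kappa> \<in> Col nx ny d" using pq(1) unfolding Col_def by auto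
qed

lemma rank_le_cols:
  fixes B :: "nat \<Rightarrow> 'a::field mpoly"
  assumes "bilinear_seq nx ny m B" "2 \<le> d"
  shows "rank_rows (M_y_rows ny m (tilde B) d) \<le> nx * card (y_monoms ny (d - 1))"
proof -
  have "M_y_rows ny m (tilde B) d \<subseteq> V.span (mon ` Col nx ny d)"
    unfolding rows_eq using keys_row[OF assms(1) _ assms(2)]
    by (auto intro!: in_span_mon finite_Col)
  then have "rank_rows (M_y_rows ny m (tilde B) d) \<le> card (mon ` Col nx ny d :: 'a mpoly set)"
    unfolding rank_rows_def by (intro V.dim_le_card) (auto simp: finite_Col)
  also have "\<dots> \<le> card (Col nx ny d)" by (intro card_image_le finite_Col)
  also have "\<dots> \<le> nx * card (y_monoms ny (d - 1))" by (rule card_Col)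
  finally show ?thesis .
qed

lemma rank_le_rows:
  fixes Bt :: "nat \<Rightarrow> 'a::field mpoly"
  shows "rank_rows (M_y_rows ny m Bt d) \<le> m * card (y_monoms ny (d - 2))"
proof -
  have "rank_rows (M_y_rows ny m Bt d) \<le> card (fam Bt ` Idx m ny d)"
    unfolding rank_rows_def rows_eq by (intro V.dim_le_card V.span_superset) (auto simp: finite_Idx)
  also have "\<dots> \<le> card (Idx m ny d)" by (intro card_image_le finite_Idx)
  finally show ?thesis by (simp add: card_Idx)
qed

lemma rank_eq_iff:
  fixes Bt :: "nat \<Rightarrow> 'a::field mpoly"
  shows "rank_rows (M_y_rows ny m Bt d) = card (Idx m ny d) \<longleftrightarrow>
     inj_on (fam Bt) (Idx m ny d) \<and> V.independent (fam Bt ` Idx m ny d)"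
proof
  assume a: "rank_rows (M_y_rows ny m Bt d) = card (Idx m ny d)"
  have le1: "V.dim (fam Bt ` Idx m ny d) \<le> card (fam Bt ` Idx m ny d)"
    by (intro V.dim_le_card V.span_superset) (auto simp: finite_Idx)
  have le2: "card (fam Bt ` Idx m ny d) \<le> card (Idx m ny d)" by (intro card_image_le finite_Idx)
  have eq: "card (fam Bt ` Idx m ny d) = card (Idx m ny d)"
    using a le1 le2 unfolding rank_rows_def rows_eq by simp
  then have "inj_on (fam Bt) (Idx m ny d)" using eq_card_imp_inj_on[OF finite_Idx] by blast
  moreover have "V.independent (fam Bt ` Idx m ny d)"
    using a eq unfolding rank_rows_def rows_eq by (intro indep_of_dim) (auto simp: finite_Idx)
  ultimately show "inj_on (fam Bt) (Idx m ny d) \<and> V.independent (fam Bt ` Idx m ny d)" ..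
next
  assume "inj_on (fam Bt) (Idx m ny d) \<and> V.independent (fam Bt ` Idx m ny d)"
  then show "rank_rows (M_y_rows ny m Bt d) = card (Idx m ny d)"
    unfolding rank_rows_def rows_eq by (simp add: V.dim_eq_card_independent card_image)
qed

definition Gc :: "nat \<Rightarrow> nat \<Rightarrow> (nat \<times> monom \<Rightarrow> 'a::field) \<Rightarrow> nat \<Rightarrow> 'a mpoly" where
  "Gc ny d c i = (\<Sum>\<mu>\<in>y_monoms ny (d - 2). pscale (c (i, \<mu>)) (mon \<mu>))"

lemma sum_Gc:
  fixes Bt :: "nat \<Rightarrow> 'a::field mpoly"
  shows "(\<Sum>i<m. Gc ny d c i * Bt i) = (\<Sum>x\<in>Idx m ny d. pscale (c x) (fam Bt x))"
proof -
  have "(\<Sum>i<m. Gc ny d c i * Bt i) = (\<Sum>i<m. \<Sum>\<mu>\<in>y_monoms ny (d - 2). pscale (c (i, \<mu>)) (mon \<mu> * Bt i))"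
    unfolding Gc_def by (simp add: sum_distrib_right pscale_mult)
  also have "\<dots> = (\<Sum>x\<in>Idx m ny d. pscale (c x) (fam Bt x))"
    unfolding Idx_def fam_def by (subst sum.cartesian_product) (simp add: case_prod_beta)
  finally show ?thesis .
qed

lemma no_fall_aux:
  fixes Bt :: "nat \<Rightarrow> 'a::field mpoly"
  assumes inj: "inj_on (fam Bt) (Idx m ny d)" and ind: "V.independent (fam Bt ` Idx m ny d)"
    and hom: "\<forall>i<m. y_homog ny (d - 2) (G i)" and syz: "syzygy m Bt G"
  shows "\<forall>i<m. G i = 0"
proof -
  define c where "c = (\<lambda>(i, \<mu>). Poly_Mapping.lookup (G i) \<mu>)"
  have GG: "G i = Gc ny d c i" if "i < m" for i
    unfolding Gc_def c_def using hom that unfolding y_homog_def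
    by (simp add: expansion[symmetric] finite_y_monoms)
  have "(\<Sum>x\<in>Idx m ny d. pscale (c x) (fam Bt x)) = 0"
    using syz unfolding syzygy_def sum_Gc[symmetric] by (simp add: GG)
  then have s0: "(\<Sum>v\<in>fam Bt ` Idx m ny d. pscale (c (the_inv_into (Idx m ny d) (fam Bt) v)) v) = 0"
    by (subst sum.reindex[OF inj]) (simp add: the_inv_into_f_f[OF inj])
  have c0: "c x = 0" if "x \<in> Idx m ny d" for x
  proof -
    have "c (the_inv_into (Idx m ny d) (fam Bt) (fam Bt x)) = 0"
      by (rule V.independentD[OF ind _ _ s0]) (auto simp: finite_Idx that)
    then show ?thesis by (simp add: the_inv_into_f_f[OF inj that])
  qed
  show ?thesis
  proof (intro allI impI)
    fix i assume i: "i < m"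
    show "G i = 0"
    proof (rule poly_mapping_eqI)
      fix \<mu>
      show "Poly_Mapping.lookup (G i) \<mu> = Poly_Mapping.lookup 0 \<mu>"
      proof (cases "\<mu> \<in> y_monoms ny (d - 2)")
        case True
        then have "c (i, \<mu>) = 0" using c0 i by (simp add: Idx_def)
        then show ?thesis by (simp add: c_def)
      next
        case False
        then have "\<mu> \<notin> Poly_Mapping.keys (G i)" using hom i unfolding y_homog_def by blast
        then show ?thesis by (simp add: in_keys_iff)
      qed
    qed
  qed
qed

lemma dep_coeffs:
  fixes Bt :: "nat \<Rightarrow> 'a::field mpoly"
  assumes "\<not> (inj_on (fam Bt) (Idx m ny d) \<and> V.independent (fam Bt ` Idx m ny d))"
  shows "\<exists>c. (\<exists>x\<in>Idx m ny d. c x \<noteq> 0) \<and> (\<Sum>x\<in>Idx m ny d. pscale (c x) (fam Bt x)) = 0"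
proof (cases "inj_on (fam Bt) (Idx m ny d)")
  case False
  then obtain a b where ab: "a \<in> Idx m ny d" "b \<in> Idx m ny d" "a \<noteq> b" "fam Bt a = fam Bt b"
    unfolding inj_on_def by blast
  define c where "c = (\<lambda>x. if x = a then 1 else if x = b then -1 else (0::'a))"
  have ca: "c a = 1" and cb: "c b = -1" and co: "\<And>x. x \<noteq> a \<Longrightarrow> x \<noteq> b \<Longrightarrow> c x = 0"
    using ab(3) unfolding c_def by auto
  have "(\<Sum>x\<in>Idx m ny d. pscale (c x) (fam Bt x)) = (\<Sum>x\<in>{a, b}. pscale (c x) (fam Bt x))"
  proof (rule sum.mono_neutral_right)
    show "finite (Idx m ny d)" by (rule finite_Idx)
    show "{a, b} \<subseteq> Idx m ny d" using ab by blast
    show "\<forall>i\<in>Idx m ny d - {a, b}. pscale (c i) (fam Bt i) = 0" using co by simp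
  qed
  also have "\<dots> = pscale (c a) (fam Bt a) + pscale (c b) (fam Bt b)"
    using ab(3) by simp
  also have "\<dots> = 0" unfolding ca cb ab(4) by (simp add: V.scale_minus_left)
  finally have "(\<Sum>x\<in>Idx m ny d. pscale (c x) (fam Bt x)) = 0" .
  moreover have "c a \<noteq> 0" using ca by simp
  ultimately show ?thesis using ab(1) by (intro exI[of _ c]) blast
next
  case True
  then have dep: "V.dependent (fam Bt ` Idx m ny d)" using assms by blast
  have fin: "finite (fam Bt ` Idx m ny d)" using finite_Idx by (rule finite_imageI)
  obtain u where u: "\<exists>v\<in>fam Bt ` Idx m ny d. u v \<noteq> 0"
     "(\<Sum>v\<in>fam Bt ` Idx m ny d. pscale (u v) v) = 0"
    using dep V.dependent_finite[OF fin] by blast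
  have "(\<Sum>x\<in>Idx m ny d. pscale (u (fam Bt x)) (fam Bt x)) = 0"
    using u(2) sum.reindex[OF True, of "\<lambda>v. pscale (u v) v"] by (simp add: comp_def)
  moreover obtain x where "x \<in> Idx m ny d" "u (fam Bt x) \<noteq> 0" using u(1) by blast
  ultimately show ?thesis by (intro exI[of _ "\<lambda>x. u (fam Bt x)"]) blast
qed

definition hasX :: "'a::field mpoly \<Rightarrow> bool" where
  "hasX p \<longleftrightarrow> (\<forall>\<kappa>\<in>Poly_Mapping.keys p. \<exists>a. X a \<in> Poly_Mapping.keys \<kappa>)"

lemma hasX_mult: "hasX q \<Longrightarrow> hasX (h * q)"
  unfolding hasX_def
proof
  fix \<kappa> assume q: "\<forall>\<kappa>\<in>Poly_Mapping.keys q. \<exists>a. X a \<in> Poly_Mapping.keys \<kappa>"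
    and k: "\<kappa> \<in> Poly_Mapping.keys (h * q)"
  then obtain a b where ab: "b \<in> Poly_Mapping.keys q" "\<kappa> = a + b"
    using keys_mult[of h q] by auto
  then obtain z where "X z \<in> Poly_Mapping.keys b" using q by blast
  then have "X z \<in> Poly_Mapping.keys \<kappa>" using ab by (simp add: in_keys_iff lookup_add)
  then show "\<exists>a. X a \<in> Poly_Mapping.keys \<kappa>" ..
qed

lemma hasX_sum: "(\<And>i. i \<in> I \<Longrightarrow> hasX (f i)) \<Longrightarrow> hasX (sum f I)"
  unfolding hasX_def using keys_sum[of f I] by blast

lemma hasX_diff: "hasX p \<Longrightarrow> hasX q \<Longrightarrow> hasX (p - q)"
proof -
  have "Poly_Mapping.keys (p - q) \<subseteq> Poly_Mapping.keys p \<union> Poly_Mapping.keys q"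
    by (auto simp: in_keys_iff lookup_minus)
  then show "hasX p \<Longrightarrow> hasX q \<Longrightarrow> hasX (p - q)" unfolding hasX_def by blast
qed

lemma hasX_tilde:
  fixes B :: "nat \<Rightarrow> 'a::field mpoly"
  assumes "bilinear_seq nx ny m B" "i < m"
  shows "hasX (tilde B i)"
  unfolding hasX_def
proof
  fix \<kappa> assume "\<kappa> \<in> Poly_Mapping.keys (tilde B i)"
  then obtain p q where "\<kappa> = Poly_Mapping.single (X p) 1 + Poly_Mapping.single (Y q) 1"
    using keys_quad_bilinear[of nx ny "B i"] assms unfolding bilinear_seq_def tilde_def by blast
  then have "X p \<in> Poly_Mapping.keys \<kappa>" by (simp add: in_keys_iff lookup_add)
  then show "\<exists>a. X a \<in> Poly_Mapping.keys \<kappa>" ..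
qed

lemma trivial_zero:
  fixes B :: "nat \<Rightarrow> 'a::field mpoly"
  assumes "bilinear_seq nx ny m B" "trivial_syzygy m (tilde B) G" "y_homog ny e (G k)" "k < m"
  shows "G k = 0"
proof -
  obtain h where h: "\<forall>k<m. G k = (\<Sum>i<k. h i k * tilde B i) - (\<Sum>j\<in>{k<..<m}. h k j * tilde B j)"
    using assms(2) unfolding trivial_syzygy_def by blast
  have "hasX (G k)"
    unfolding h[rule_format, OF assms(4)] using assms(1,4)
    by (intro hasX_diff hasX_sum hasX_mult) (auto intro: hasX_tilde[OF assms(1)])
  moreover have "\<kappa> \<in> Poly_Mapping.keys (G k) \<Longrightarrow> \<not> (\<exists>a. X a \<in> Poly_Mapping.keys \<kappa>)" for \<kappa>
    using assms(3) unfolding y_homog_def y_monoms_def by auto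
  ultimately have "Poly_Mapping.keys (G k) = {}" unfolding hasX_def by blast
  then show ?thesis by simp
qed

lemma fall_iff:
  fixes B :: "nat \<Rightarrow> 'a::field mpoly"
  assumes "bilinear_seq nx ny m B" "2 \<le> d"
  shows "y_degree_fall ny m B d \<longleftrightarrow> rank_rows (M_y_rows ny m (tilde B) d) \<noteq> card (Idx m ny d)"
proof
  assume "y_degree_fall ny m B d"
  then obtain G where G: "\<forall>i<m. y_homog ny (d - 2) (G i)" "syzygy m (tilde B) G"
    "\<not> trivial_syzygy m (tilde B) G" unfolding y_degree_fall_def by blast
  show "rank_rows (M_y_rows ny m (tilde B) d) \<noteq> card (Idx m ny d)"
  proof
    assume "rank_rows (M_y_rows ny m (tilde B) d) = card (Idx m ny d)"
    then have "\<forall>i<m. G i = 0" using G by (intro no_fall_aux) (auto simp: rank_eq_iff)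
    then have "trivial_syzygy m (tilde B) G"
      unfolding trivial_syzygy_def by (intro exI[of _ "\<lambda>_ _. 0"]) simp
    then show False using G by blast
  qed
next
  assume "rank_rows (M_y_rows ny m (tilde B) d) \<noteq> card (Idx m ny d)"
  then obtain c where c: "\<exists>x\<in>Idx m ny d. c x \<noteq> 0"
    "(\<Sum>x\<in>Idx m ny d. pscale (c x) (fam (tilde B) x)) = 0"
    using dep_coeffs rank_eq_iff by metis
  define G where "G = Gc ny d c"
  have hom: "\<forall>i<m. y_homog ny (d - 2) (G i)"
    unfolding G_def Gc_def y_homog_def by (auto intro: keys_sum_mon[THEN subsetD])
  have syz: "syzygy m (tilde B) G"
    unfolding syzygy_def G_def sum_Gc using c(2) .
  obtain i \<mu> where x: "i < m" "\<mu> \<in> y_monoms ny (d - 2)" "c (i, \<mu>) \<noteq> 0"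
    using c(1) unfolding Idx_def by auto
  have "Poly_Mapping.lookup (G i) \<mu> \<noteq> 0"
    unfolding G_def Gc_def using x by (simp add: lookup_sum_mon finite_y_monoms)
  then have "G i \<noteq> 0" by auto
  then have "\<not> trivial_syzygy m (tilde B) G"
    using trivial_zero[of nx ny m B G "d - 2" i] assms(1) hom x(1) by blast
  then show "y_degree_fall ny m B d"
    unfolding y_degree_fall_def using assms(2) hom syz by blast
qed



lemma arith_main:
  fixes nx ny m d :: nat
  assumes "1 \<le> ny" "2 \<le> d" "nx < m"
  shows "m * ((ny + d - 3) choose (d - 2)) \<le> nx * ((ny + d - 2) choose (d - 1))
           \<longleftrightarrow> \<not> (nx * (ny - 1) < (m - nx) * (d - 1))"
    and "m * ((ny + d - 3) choose (d - 2)) = nx * ((ny + d - 2) choose (d - 1))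
           \<Longrightarrow> nx * (ny - 1) < (m - nx) * (Suc d - 1)"
proof -
  obtain k where k: "ny = Suc k" using assms(1) by (cases ny) auto
  obtain n where n: "d = Suc (Suc n)" using assms(2) by (metis add_2_eq_Suc le_Suc_ex)
  obtain t where t: "m = nx + t" "0 < t" using assms(3) by (metis less_imp_add_positive)
  define b where "b = (k + n) choose n"
  have b0: "0 < b" unfolding b_def by simp
  have e1: "ny + d - 3 = k + n" "d - 2 = n" "ny + d - 2 = Suc (k + n)" "d - 1 = Suc n"
    "ny - 1 = k" "m - nx = t" "Suc d - 1 = Suc (Suc n)"
    using k n t by auto
  have key: "Suc n * (Suc (k + n) choose Suc n) = Suc (k + n) * b"
    unfolding b_def by (rule Suc_times_binomial)
  have iff1: "m * b \<le> nx * (Suc (k + n) choose Suc n) \<longleftrightarrow> m * Suc n \<le> nx * Suc (k + n)"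
  proof -
    have "m * b \<le> nx * (Suc (k + n) choose Suc n) \<longleftrightarrow>
          Suc n * (m * b) \<le> Suc n * (nx * (Suc (k + n) choose Suc n))"
      by (metis mult_le_cancel1 zero_less_Suc)
    also have "Suc n * (nx * (Suc (k + n) choose Suc n)) = (nx * Suc (k + n)) * b"
      using key by (metis mult.assoc mult.left_commute)
    also have "Suc n * (m * b) = (m * Suc n) * b" by (simp add: algebra_simps)
    finally show ?thesis using b0 by (metis mult_le_cancel2)
  qed
  have iff2: "m * b = nx * (Suc (k + n) choose Suc n) \<longleftrightarrow> m * Suc n = nx * Suc (k + n)"
  proof -
    have "m * b = nx * (Suc (k + n) choose Suc n) \<longleftrightarrow>
          Suc n * (m * b) = Suc n * (nx * (Suc (k + n) choose Suc n))"
      by (metis mult_cancel1 nat.distinct(1))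
    also have "Suc n * (nx * (Suc (k + n) choose Suc n)) = (nx * Suc (k + n)) * b"
      using key by (metis mult.assoc mult.left_commute)
    also have "Suc n * (m * b) = (m * Suc n) * b" by (simp add: algebra_simps)
    finally show ?thesis using b0 by (metis mult_cancel2 less_not_refl)
  qed
  show "m * ((ny + d - 3) choose (d - 2)) \<le> nx * ((ny + d - 2) choose (d - 1))
           \<longleftrightarrow> \<not> (nx * (ny - 1) < (m - nx) * (d - 1))"
    unfolding e1 b_def[symmetric] iff1 unfolding t(1) by (simp add: algebra_simps not_less)
  show "m * ((ny + d - 3) choose (d - 2)) = nx * ((ny + d - 2) choose (d - 1))
           \<Longrightarrow> nx * (ny - 1) < (m - nx) * (Suc d - 1)"
    unfolding e1 b_def[symmetric] iff2 unfolding t(1) using t(2) by (simp add: algebra_simps)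
qed

lemma real_cond:
  fixes nx ny m d :: nat
  assumes "nx < m" "0 < d"
  shows "real d > real (nx * (ny - 1)) / real (m - nx) + 1 \<longleftrightarrow> nx * (ny - 1) < (m - nx) * (d - 1)"
proof -
  have pos: "real (m - nx) > 0" using assms by simp
  have "real d > real (nx * (ny - 1)) / real (m - nx) + 1 \<longleftrightarrow>
        real (nx * (ny - 1)) / real (m - nx) < real (d - 1)"
  proof -
    have "real (d - 1) = real d - 1" using assms(2) by (simp add: of_nat_diff)
    then show ?thesis by (simp only: less_diff_eq)
  qed
  also have "\<dots> \<longleftrightarrow> real (nx * (ny - 1)) < real (d - 1) * real (m - nx)"
    using pos by (simp add: divide_less_eq)
  also have "\<dots> \<longleftrightarrow> nx * (ny - 1) < (m - nx) * (d - 1)"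
    by (metis of_nat_less_iff of_nat_mult mult.commute)
  finally show ?thesis .
qed

theorem proposition4:
  fixes B :: "nat \<Rightarrow> 'a::{field,finite} mpoly"
    and nx ny m :: nat
  assumes "0 < nx" and "0 < ny" and "0 < m" and "nx + ny \<le> m"
    and "bilinear_seq nx ny m B"
    and "y_semiregular nx ny m (tilde B)"
  shows "d_y_ff ny m B =
    enat (LEAST d::nat. 0 < d \<and> real d > real (nx * (ny - 1)) / real (m - nx) + 1)"
proof -
  let ?R = "\<lambda>d. rank_rows (M_y_rows ny m (tilde B) d)"
  let ?rows = "\<lambda>d. m * ((ny + d - 3) choose (d - 2))"
  let ?cols = "\<lambda>d. nx * ((ny + d - 2) choose (d - 1))"
  let ?Q = "\<lambda>d. nx * (ny - 1) < (m - nx) * (d - 1)"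
  let ?P = "\<lambda>d::nat. 0 < d \<and> real d > real (nx * (ny - 1)) / real (m - nx) + 1"
  have nxm: "nx < m" using assms by linarith
  have ny1: "1 \<le> ny" using assms by simp
  have cardI: "card (Idx m ny d) = ?rows d" if "2 \<le> d" for d
  proof -
    have "ny + (d - 2) - 1 = ny + d - 3" using that by arith
    then show ?thesis by (simp add: card_Idx card_y_monoms)
  qed
  have colsq: "nx * card (y_monoms ny (d - 1)) = ?cols d" if "2 \<le> d" for d
  proof -
    have "ny + (d - 1) - 1 = ny + d - 2" using that by arith
    then show ?thesis by (simp add: card_y_monoms)
  qed
  have Rle_cols: "?R d \<le> ?cols d" if "2 \<le> d" for d
    using rank_le_cols[OF assms(5) that] by (simp only: colsq[OF that])
  have Rle_rows: "?R d \<le> ?rows d" if "2 \<le> d" for d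
    using rank_le_rows[of ny m "tilde B" d] cardI[OF that] card_Idx[of m ny d] by (simp only:)
  have Peq: "?P d \<longleftrightarrow> ?Q d" if "0 < d" for d
    using real_cond[OF nxm that, of ny] that by simp
  define D where "D = (LEAST d::nat. ?P d)"
  have exP: "\<exists>d. ?P d"
  proof
    let ?w = "nx * (ny - 1) + 2"
    have "nx * (ny - 1) < 1 * (?w - 1)" by simp
    also have "\<dots> \<le> (m - nx) * (?w - 1)" using nxm by (intro mult_le_mono1) simp
    finally show "?P ?w" using Peq[of ?w] by simp
  qed
  have PD: "?P D" unfolding D_def using exP by (rule LeastI_ex)
  then have QD: "?Q D" and D0: "0 < D" using Peq by auto
  have notQ: "\<not> ?Q d" if "0 < d" "d < D" for d
  proof -
    have "\<not> ?P d" using that(2) unfolding D_def by (rule not_less_Least)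
    then show ?thesis using Peq[OF that(1)] that(1) by simp
  qed
  have D2: "2 \<le> D"
  proof (rule ccontr)
    assume "\<not> 2 \<le> D"
    then have "D = 1" using D0 by simp
    then show False using QD by simp
  qed
  have fallD: "y_degree_fall ny m B D"
  proof -
    have "\<not> ?rows D \<le> ?cols D" using arith_main(1)[OF ny1 D2 nxm] QD by simp
    then have "?R D \<noteq> card (Idx m ny D)" using Rle_cols[OF D2] cardI[OF D2] by simp
    then show ?thesis using fall_iff[OF assms(5) D2] by simp
  qed
  have reg: "?R d = card (Idx m ny d)" if d: "2 \<le> d" "d < D" for d
  proof -
    have regd: "y_d_regular ny m (tilde B) d \<Longrightarrow> ?thesis"
      unfolding y_d_regular_def using d cardI[OF d(1)] by auto
    show ?thesis
    proof (cases "\<exists>d. y_reg_cond nx ny m (tilde B) d")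
      case False
      then have "d_y_reg nx ny m (tilde B) = \<infinity>" unfolding d_y_reg_def by simp
      then show ?thesis using assms(6) regd unfolding y_semiregular_def by simp
    next
      case True
      define d0 where "d0 = (LEAST d. y_reg_cond nx ny m (tilde B) d)"
      have dreg: "d_y_reg nx ny m (tilde B) = enat d0" unfolding d_y_reg_def d0_def using True by simp
      have c0: "y_reg_cond nx ny m (tilde B) d0" unfolding d0_def using True by (rule LeastI_ex)
      show ?thesis
      proof (cases "d < d0")
        case True
        then show ?thesis using assms(6) regd dreg unfolding y_semiregular_def by simp
      next
        case False
        have d02: "2 \<le> d0" and Rd0: "?R d0 = ?cols d0" using c0 unfolding y_reg_cond_def by auto
        have "\<not> ?Q d0" using notQ[of d0] False d d02 by simp
        then have "?rows d0 \<le> ?cols d0" using arith_main(1)[OF ny1 d02 nxm] by simp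
        moreover have "?R d0 \<le> ?rows d0" using Rle_rows[OF d02] .
        ultimately have eq: "?rows d0 = ?cols d0" using Rd0 by linarith
        have "?Q (Suc d0)" using arith_main(2)[OF ny1 d02 nxm eq] .
        then have "?P (Suc d0)" using Peq[of "Suc d0"] by simp
        then have "D \<le> Suc d0" unfolding D_def by (rule Least_le)
        then have "d = d0" using False d by linarith
        then show ?thesis using Rd0 eq cardI[OF d02] by simp
      qed
    qed
  qed
  have nofall: "\<not> y_degree_fall ny m B d" if "d < D" for d
  proof
    assume f: "y_degree_fall ny m B d"
    then have d2: "2 \<le> d" unfolding y_degree_fall_def by simp
    show False using f fall_iff[OF assms(5) d2] reg[OF d2 that] by simp
  qed
  have "(LEAST d. y_degree_fall ny m B d) = D"
  proof (rule Least_equality)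
    show "y_degree_fall ny m B D" by (rule fallD)
    show "\<And>y. y_degree_fall ny m B y \<Longrightarrow> D \<le> y" using nofall by (metis not_less)
  qed
  then show ?thesis unfolding d_y_ff_def D_def[symmetric] using fallD by auto
qed

end
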